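(* Let $G$ be a finite connected multigraph without self-loops with a boundary vertex $\partial$, where both orientations of each edge $e$ carry the same nonnegative weight $U_e$, and the collection of weights of the unoriented edges $(U_e)_{e\in E}$ is generic. Perform the CLEB walk from a vertex $x\neq\partial$, and let $S_t$ be the set of oriented edges exposed by it up to step $t$. Let $\tau_1=1$ and, inductively for $k\ge2$, let $\tau_k$ be the smallest $t>\tau_{k-1}$ such that the oriented edge revealed by the CLEB walk at step $t$ has a reversal that was not exposed before step $t$. Let $\bar S_{\tau_k}$ be the set of unoriented edges one of whose orientations lies in $S_{\tau_k}$. Let $(T_k)_{k\ge1}$ be the invasion percolation process started at $x$. Then $\bar S_{\tau_k}=T_k$ for every $k$ for which $\tau_k$ is defined.
   Context: Weights $(W_x)_{x\in N}$ are generic if $\sum_{x\in S}n_xW_x\neq0$ for every finite $S$ and integers $n_x$ not all zero. Invasion percolation started at $x$: $T_1$ is the edge of smallest weight incident to $x$; given the tree $T_k$, $T_{k+1}$ is $T_k$ together with the edge of smallest weight among edges with exactly one endpoint in (the vertex set of) $T_k$. Contraction of an oriented cycle $C$: remove the vertices of $C$ and all oriented edges with both endpoints in $C$, add a new vertex $v_C$, and replace each oriented edge with exactly one endpoint in $C$ by the edge with that endpoint replaced by $v_C$; edges of contracted graphs are identified with edges of $G$. CLEB walk from $x$: set $G_0=G$, $U_0$ the given weights of oriented edges, $S_0=\emptyset$, $P_0$ the empty path at $x$, current vertex $v_1=x$. At step $j\ge1$, subtract $\pi=\min$ of the current weights over the outgoing edges of $v_j$ in $G_{j-1}$ from the weights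 of all those outgoing edges, and let $\vec e$ be the unique outgoing edge of $v_j$ now of weight $0$; $S_j=S_{j-1}\cup\{\vec e\}$ ($\vec e$ is said to be revealed/exposed at step $j$). If $\vec e_+$ is not on the path $P_{j-1}$: $G_j=G_{j-1}$, $P_j=P_{j-1}$ extended by $\vec e$, $v_{j+1}=\vec e_+$, and stop if $\vec e_+=\partial$. If $\vec e_+$ is a vertex $y$ of $P_{j-1}$: contract the cycle formed by the part of $P_{j-1}$ from $y$ to $v_j$ together with $\vec e$ to obtain $G_j$ (with the current modified weights), let $P_j$ be $P_{j-1}$ truncated at $y$ (now ending at the new vertex $v_C$), and $v_{j+1}=v_C$. *)

theory Defs
  imports Complex_Main
begin

text \<open>A multigraph is given by a vertex set V, an edge set E (edges are elements of a
type 'e, so parallel edges are allowed) and endpoint maps src, tgt.  The oriented edge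
(e, True) goes from src e to tgt e, and (e, False) goes from tgt e to src e.\<close>

definition otail :: "('e \<Rightarrow> 'v) \<Rightarrow> ('e \<Rightarrow> 'v) \<Rightarrow> 'e \<times> bool \<Rightarrow> 'v" where
  "otail src tgt d = (if snd d then src (fst d) else tgt (fst d))"

definition ohead :: "('e \<Rightarrow> 'v) \<Rightarrow> ('e \<Rightarrow> 'v) \<Rightarrow> 'e \<times> bool \<Rightarrow> 'v" where
  "ohead src tgt d = (if snd d then tgt (fst d) else src (fst d))"

definition flip :: "'e \<times> bool \<Rightarrow> 'e \<times> bool" where
  "flip d = (fst d, \<not> snd d)"

definition mg_adj :: "'e set \<Rightarrow> ('e \<Rightarrow> 'v) \<Rightarrow> ('e \<Rightarrow> 'v) \<Rightarrow> ('v \<times> 'v) set" where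
  "mg_adj E src tgt = {(src e, tgt e) | e. e \<in> E} \<union> {(tgt e, src e) | e. e \<in> E}"

definition mg_connected :: "'v set \<Rightarrow> 'e set \<Rightarrow> ('e \<Rightarrow> 'v) \<Rightarrow> ('e \<Rightarrow> 'v) \<Rightarrow> bool" where
  "mg_connected V E src tgt = (\<forall>u\<in>V. \<forall>w\<in>V. (u, w) \<in> (mg_adj E src tgt)\<^sup>*)"

definition finite_loopless_multigraph ::
  "'v set \<Rightarrow> 'e set \<Rightarrow> ('e \<Rightarrow> 'v) \<Rightarrow> ('e \<Rightarrow> 'v) \<Rightarrow> bool" where
  "finite_loopless_multigraph V E src tgt =
     (finite V \<and> finite E \<and> (\<forall>e\<in>E. src e \<in> V \<and> tgt e \<in> V) \<and> (\<forall>e\<in>E. src e \<noteq> tgt e))"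

definition generic :: "'a set \<Rightarrow> ('a \<Rightarrow> real) \<Rightarrow> bool" where
  "generic N W = (\<forall>S n. finite S \<longrightarrow> S \<subseteq> N \<longrightarrow> (\<exists>x\<in>S. n x \<noteq> (0::int)) \<longrightarrow>
                       (\<Sum>x\<in>S. of_int (n x) * W x) \<noteq> 0)"

definition ip_verts :: "('e \<Rightarrow> 'v) \<Rightarrow> ('e \<Rightarrow> 'v) \<Rightarrow> 'v \<Rightarrow> 'e set \<Rightarrow> 'v set" where
  "ip_verts src tgt x T = {x} \<union> src ` T \<union> tgt ` T"

definition ip_candidates :: "'e set \<Rightarrow> ('e \<Rightarrow> 'v) \<Rightarrow> ('e \<Rightarrow> 'v) \<Rightarrow> 'v \<Rightarrow> 'e set \<Rightarrow> 'e set" where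
  "ip_candidates E src tgt x T =
     {e \<in> E. (src e \<in> ip_verts src tgt x T) \<noteq> (tgt e \<in> ip_verts src tgt x T)}"

fun invasion :: "'e set \<Rightarrow> ('e \<Rightarrow> 'v) \<Rightarrow> ('e \<Rightarrow> 'v) \<Rightarrow> ('e \<Rightarrow> real) \<Rightarrow> 'v \<Rightarrow> nat \<Rightarrow> 'e set" where
  "invasion E src tgt U x 0 = {}"
| "invasion E src tgt U x (Suc k) =
     (let T = invasion E src tgt U x k; C = ip_candidates E src tgt x T in
      if C = {} then T else insert (arg_min_on U C) T)"

text \<open>Vertices of the contracted graph G_j are represented by
sets of original vertices: cls u is the vertex of G_j containing the original vertex u.
The path P_j is the list of its vertices (of G_j), the current vertex is its last entry.
wt is the current weight of oriented edges, exposed is S_j, stopped records that the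
walk has reached the boundary vertex, revealed is the edge revealed at the last step.\<close>

record ('v, 'e) cleb_state =
  cls :: "'v \<Rightarrow> 'v set"
  path :: "'v set list"
  wt :: "'e \<times> bool \<Rightarrow> real"
  exposed :: "('e \<times> bool) set"
  stopped :: bool
  revealed :: "('e \<times> bool) option"

definition cleb_init :: "('e \<Rightarrow> real) \<Rightarrow> 'v \<Rightarrow> ('v, 'e) cleb_state" where
  "cleb_init U x = \<lparr> cls = (\<lambda>u. {u}), path = [{x}], wt = (\<lambda>d. U (fst d)),
                     exposed = {}, stopped = False, revealed = None \<rparr>"

definition cleb_step :: "'e set \<Rightarrow> ('e \<Rightarrow> 'v) \<Rightarrow> ('e \<Rightarrow> 'v) \<Rightarrow> 'v \<Rightarrow>
     ('v, 'e) cleb_state \<Rightarrow> ('v, 'e) cleb_state" where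
  "cleb_step E src tgt bd s =
    (if stopped s then s else
     (let v = last (path s);
          out = {d. fst d \<in> E \<and> otail src tgt d \<in> v \<and> ohead src tgt d \<notin> v};
          \<pi> = Min (wt s ` out);
          W' = (\<lambda>d. if d \<in> out then wt s d - \<pi> else wt s d);
          ed = (THE d. d \<in> out \<and> W' d = 0);
          hb = cls s (ohead src tgt ed)
      in if hb \<in> set (path s) then
           (let i = (LEAST i. i < length (path s) \<and> path s ! i = hb);
                cyc = drop i (path s);
                new = \<Union> (set cyc)
            in s\<lparr> cls := (\<lambda>u. if cls s u \<in> set cyc then new else cls s u),
                  path := take i (path s) @ [new],
                  wt := W', exposed := insert ed (exposed s), revealed := Some ed \<rparr>)
         else
           s\<lparr> path := path s @ [hb], wt := W', exposed := insert ed (exposed s),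
              stopped := (bd \<in> hb), revealed := Some ed \<rparr>))"

fun cleb :: "'e set \<Rightarrow> ('e \<Rightarrow> 'v) \<Rightarrow> ('e \<Rightarrow> 'v) \<Rightarrow> ('e \<Rightarrow> real) \<Rightarrow> 'v \<Rightarrow> 'v \<Rightarrow> nat \<Rightarrow>
     ('v, 'e) cleb_state" where
  "cleb E src tgt U bd x 0 = cleb_init U x"
| "cleb E src tgt U bd x (Suc j) = cleb_step E src tgt bd (cleb E src tgt U bd x j)"

definition cleb_new_step :: "'e set \<Rightarrow> ('e \<Rightarrow> 'v) \<Rightarrow> ('e \<Rightarrow> 'v) \<Rightarrow> ('e \<Rightarrow> real) \<Rightarrow> 'v \<Rightarrow> 'v \<Rightarrow>
     nat \<Rightarrow> bool" where
  "cleb_new_step E src tgt U bd x t =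
     (1 \<le> t \<and> \<not> stopped (cleb E src tgt U bd x (t - 1)) \<and>
      (case revealed (cleb E src tgt U bd x t) of
         None \<Rightarrow> False
       | Some d \<Rightarrow> flip d \<notin> exposed (cleb E src tgt U bd x (t - 1))))"

text \<open>cleb_tau k t: tau_k is defined and equals t.\<close>

inductive cleb_tau :: "'e set \<Rightarrow> ('e \<Rightarrow> 'v) \<Rightarrow> ('e \<Rightarrow> 'v) \<Rightarrow> ('e \<Rightarrow> real) \<Rightarrow> 'v \<Rightarrow> 'v \<Rightarrow>
     nat \<Rightarrow> nat \<Rightarrow> bool"
  for E src tgt U bd x where
  tau_one: "cleb_tau E src tgt U bd x 1 1"
| tau_suc: "cleb_tau E src tgt U bd x k s \<Longrightarrow> s < t \<Longrightarrow> cleb_new_step E src tgt U bd x t \<Longrightarrow>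
            (\<forall>u. s < u \<and> u < t \<longrightarrow> \<not> cleb_new_step E src tgt U bd x u) \<Longrightarrow>
            cleb_tau E src tgt U bd x (Suc k) t"

definition unoriented :: "('e \<times> bool) set \<Rightarrow> 'e set" where
  "unoriented S = {e. \<exists>b. (e, b) \<in> S}"

end

theory Submission
  imports Defs
begin

lemma otail_flip[simp]: "otail src tgt (flip d) = ohead src tgt d"
  by (simp add: otail_def ohead_def flip_def)
lemma ohead_flip[simp]: "ohead src tgt (flip d) = otail src tgt d"
  by (simp add: otail_def ohead_def flip_def)
lemma fst_flip[simp]: "fst (flip d) = fst d"
  by (simp add: flip_def)
lemma flip_flip[simp]: "flip (flip d) = d"
  by (simp add: flip_def)
lemma flip_neq[simp]: "flip d \<noteq> d" "d \<noteq> flip d"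
  by (auto simp add: flip_def prod_eq_iff)

lemma same_fst: "fst d = fst d' \<Longrightarrow> d \<noteq> d' \<Longrightarrow> d' = flip d"
  by (cases d; cases d'; auto simp: flip_def)

lemma ends: "{otail src tgt d, ohead src tgt d} = {src (fst d), tgt (fst d)}"
  by (auto simp: otail_def ohead_def)

lemma orient: "(src e \<in> A) \<noteq> (tgt e \<in> A) \<Longrightarrow> \<exists>b. otail src tgt (e,b) \<in> A \<and> ohead src tgt (e,b) \<notin> A"
  by (cases "src e \<in> A") (auto simp: otail_def ohead_def intro: exI[of _ True] exI[of _ False])

lemma rtrancl_cross: "(a,b) \<in> r\<^sup>* \<Longrightarrow> a \<in> A \<Longrightarrow> b \<notin> A \<Longrightarrow> \<exists>u w. (u,w) \<in> r \<and> u \<in> A \<and> w \<notin> A"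
proof (induction rule: rtrancl_induct)
  case base then show ?case by simp
next
  case (step y z) then show ?case by (cases "y \<in> A") auto
qed

lemma arg_min_on_unique:
  fixes f :: "'a \<Rightarrow> 'b::linorder"
  assumes "a \<in> C" "\<forall>c\<in>C. c \<noteq> a \<longrightarrow> f a < f c"
  shows "arg_min_on f C = a"
  unfolding arg_min_on_def arg_min_def is_arg_min_def
proof (rule some_equality)
  show "a \<in> C \<and> \<not> (\<exists>y. y \<in> C \<and> f y < f a)"
    using assms by (metis less_asym)
next
  fix y assume "y \<in> C \<and> \<not> (\<exists>z. z \<in> C \<and> f z < f y)"
  then show "y = a" using assms by (metis)
qed

lemma unoriented_insert: "unoriented (insert d S) = insert (fst d) (unoriented S)"
  by (cases d) (auto simp: unoriented_def)

lemma unoriented_empty: "unoriented {} = {}"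
  by (simp add: unoriented_def)

lemma ip_verts_insert: "ip_verts src tgt x (insert e T) = insert (src e) (insert (tgt e) (ip_verts src tgt x T))"
  by (auto simp: ip_verts_def)

definition Pinv :: "'v set \<Rightarrow> 'e set \<Rightarrow> ('e \<Rightarrow> 'v) \<Rightarrow> ('e \<Rightarrow> 'v) \<Rightarrow> ('e \<Rightarrow> real) \<Rightarrow> 'v \<Rightarrow> 'v
   \<Rightarrow> ('v, 'e) cleb_state \<Rightarrow> bool" where
 "Pinv V E src tgt U bd x s \<longleftrightarrow>
   \<not> stopped s \<and> path s \<noteq> [] \<and>
   (\<forall>i<length (path s). path s ! i \<noteq> {} \<and> path s ! i \<subseteq> V \<and> bd \<notin> path s ! i) \<and>
   (\<forall>i<length (path s). \<forall>j<length (path s). i \<noteq> j \<longrightarrow> path s ! i \<inter> path s ! j = {}) \<and>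
   (\<forall>i<length (path s). \<forall>u\<in>path s ! i. cls s u = path s ! i) \<and>
   (\<forall>u. u \<notin> \<Union>(set (path s)) \<longrightarrow> cls s u = {u}) \<and>
   \<Union>(set (path s)) = ip_verts src tgt x (unoriented (exposed s)) \<and>
   (\<forall>d. fst d \<in> E \<and> otail src tgt d \<notin> \<Union>(set (path s)) \<longrightarrow> wt s d = U (fst d)) \<and>
   (\<exists>f \<mu>. (\<forall>i. Suc i < length (path s) \<longrightarrow>
          f i \<in> exposed s \<and> fst (f i) \<in> E \<and> otail src tgt (f i) \<in> path s ! i \<and>
          ohead src tgt (f i) \<in> path s ! Suc i \<and> \<mu> i = U (fst (f i)) \<and>
          (\<forall>d. fst d \<in> E \<and> otail src tgt d \<in> path s ! i \<and> ohead src tgt d \<notin> path s ! i \<and> d \<noteq> f i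
               \<longrightarrow> U (fst (f i)) < U (fst d))) \<and>
        (\<forall>i j. i < j \<and> Suc j < length (path s) \<longrightarrow> U (fst (f j)) < U (fst (f i))) \<and>
        (\<forall>i<length (path s). \<forall>d. fst d \<in> E \<and> otail src tgt d \<in> path s ! i \<and> ohead src tgt d \<notin> path s ! i
               \<longrightarrow> wt s d = U (fst d) - \<mu> i))"

locale cctx =
  fixes V :: "'v set" and E :: "'e set" and src tgt :: "'e \<Rightarrow> 'v"
    and U :: "'e \<Rightarrow> real" and bd x :: 'v
  assumes G: "finite_loopless_multigraph V E src tgt"
    and conn: "mg_connected V E src tgt"
    and bdV: "bd \<in> V"
    and gen: "generic E U"
    and xV: "x \<in> V" and xbd: "x \<noteq> bd"
begin

lemma finE: "finite E" using G by (simp add: finite_loopless_multigraph_def)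

lemma ends_V: "fst d \<in> E \<Longrightarrow> otail src tgt d \<in> V \<and> ohead src tgt d \<in> V"
  using G by (auto simp: finite_loopless_multigraph_def otail_def ohead_def)

lemma U_inj: "e \<in> E \<Longrightarrow> e' \<in> E \<Longrightarrow> U e = U e' \<Longrightarrow> e = e'"
proof (rule ccontr)
  assume a: "e \<in> E" "e' \<in> E" "U e = U e'" "e \<noteq> e'"
  define n where "n = (\<lambda>y. if y = e then (1::int) else if y = e' then -1 else 0)"
  have "(\<Sum>y\<in>{e,e'}. of_int (n y) * U y) \<noteq> 0"
    using gen a unfolding generic_def by (metis empty_subsetI finite.emptyI finite_insert insertI1 insert_subset n_def one_neq_zero)
  then show False using a by (simp add: n_def)
qed

lemma exists_out:
  assumes "A \<subseteq> V" "A \<noteq> {}" "bd \<notin> A"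
  shows "\<exists>d. fst d \<in> E \<and> otail src tgt d \<in> A \<and> ohead src tgt d \<notin> A"
proof -
  obtain a where a: "a \<in> A" using assms by auto
  then have "(a, bd) \<in> (mg_adj E src tgt)\<^sup>*" using conn assms bdV unfolding mg_connected_def by auto
  then obtain u w where uw: "(u,w) \<in> mg_adj E src tgt" "u \<in> A" "w \<notin> A"
    using rtrancl_cross[of a bd _ A] a assms by blast
  then obtain e where e: "e \<in> E" "(u = src e \<and> w = tgt e) \<or> (u = tgt e \<and> w = src e)"
    unfolding mg_adj_def by auto
  from e(2) show ?thesis
  proof
    assume "u = src e \<and> w = tgt e"
    then show ?thesis using uw e by (intro exI[of _ "(e,True)"]) (auto simp: otail_def ohead_def)
  next
    assume "u = tgt e \<and> w = src e"
    then show ?thesis using uw e by (intro exI[of _ "(e,False)"]) (auto simp: otail_def ohead_def)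
  qed
qed

lemma init: "Pinv V E src tgt U bd x (cleb_init U x)"
  unfolding Pinv_def cleb_init_def using xV xbd
  by (auto simp: unoriented_empty ip_verts_def intro!: exI[of _ "\<lambda>_. 0"])

end

lemma PinvI:
  fixes f :: "nat \<Rightarrow> 'e \<times> bool" and \<mu> :: "nat \<Rightarrow> real"
  assumes "\<not> stopped s" "path s = p" "cls s = c" "wt s = w" "exposed s = S"
   and "p \<noteq> []"
   and "\<forall>i<length p. p!i \<noteq> {} \<and> p!i \<subseteq> V \<and> bd \<notin> p!i"
   and "\<forall>i<length p. \<forall>j<length p. i \<noteq> j \<longrightarrow> p!i \<inter> p!j = {}"
   and "\<forall>i<length p. \<forall>u\<in>p!i. c u = p!i"
   and "\<forall>u. u \<notin> \<Union>(set p) \<longrightarrow> c u = {u}"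
   and "\<Union>(set p) = ip_verts src tgt x (unoriented S)"
   and "\<forall>d. fst d \<in> E \<and> otail src tgt d \<notin> \<Union>(set p) \<longrightarrow> w d = U (fst d)"
   and "\<forall>i. Suc i < length p \<longrightarrow>
          f i \<in> S \<and> fst (f i) \<in> E \<and> otail src tgt (f i) \<in> p ! i \<and>
          ohead src tgt (f i) \<in> p ! Suc i \<and> \<mu> i = U (fst (f i)) \<and>
          (\<forall>d. fst d \<in> E \<and> otail src tgt d \<in> p ! i \<and> ohead src tgt d \<notin> p ! i \<and> d \<noteq> f i
               \<longrightarrow> U (fst (f i)) < U (fst d))"
   and "\<forall>i j. i < j \<and> Suc j < length p \<longrightarrow> U (fst (f j)) < U (fst (f i))"
   and "\<forall>i<length p. \<forall>d. fst d \<in> E \<and> otail src tgt d \<in> p ! i \<and> ohead src tgt d \<notin> p ! i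
               \<longrightarrow> w d = U (fst d) - \<mu> i"
  shows "Pinv V E src tgt U bd x s"
  unfolding Pinv_def using assms by (simp only:) blast

context cctx begin

lemma step:
  assumes Ps: "Pinv V E src tgt U bd x s"
  shows "\<exists>ed. revealed (cleb_step E src tgt bd s) = Some ed \<and>
     exposed (cleb_step E src tgt bd s) = insert ed (exposed s) \<and>
     (flip ed \<notin> exposed s \<longrightarrow> ip_candidates E src tgt x (unoriented (exposed s)) \<noteq> {} \<and>
         fst ed = arg_min_on U (ip_candidates E src tgt x (unoriented (exposed s)))) \<and>
     (stopped (cleb_step E src tgt bd s) \<or> Pinv V E src tgt U bd x (cleb_step E src tgt bd s))"
proof -
  define p where "p = path s"
  define m where "m = length p - 1"
  define v where "v = last p"
  define R where "R = \<Union>(set p)"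
  define S where "S = exposed s"
  define out where "out = {d. fst d \<in> E \<and> otail src tgt d \<in> v \<and> ohead src tgt d \<notin> v}"
  note Pd = Ps[unfolded Pinv_def, folded p_def S_def R_def]
  note nst = Pd[THEN conjunct1]
  note Pd1 = Pd[THEN conjunct2]
  note pne = Pd1[THEN conjunct1]
  note Pd2 = Pd1[THEN conjunct2]
  note cl = Pd2[THEN conjunct1]
  note Pd3 = Pd2[THEN conjunct2]
  note disj = Pd3[THEN conjunct1]
  note Pd4 = Pd3[THEN conjunct2]
  note clsin = Pd4[THEN conjunct1]
  note Pd5 = Pd4[THEN conjunct2]
  note clsout = Pd5[THEN conjunct1]
  note Pd6 = Pd5[THEN conjunct2]
  note RT = Pd6[THEN conjunct1]
  note Pd7 = Pd6[THEN conjunct2]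
  note wtR = Pd7[THEN conjunct1]
  note fex = Pd7[THEN conjunct2]
  have wtR': "\<And>d. fst d \<in> E \<Longrightarrow> otail src tgt d \<notin> R \<Longrightarrow> wt s d = U (fst d)"
    using wtR unfolding R_def by blast
  have RT': "R = ip_verts src tgt x (unoriented S)" using RT unfolding R_def .
  have clsout': "\<And>u. u \<notin> R \<Longrightarrow> cls s u = {u}" using clsout unfolding R_def by blast
  have lenp: "length p = Suc m" using pne by (simp add: m_def)
  have vm: "v = p ! m" using pne by (simp add: v_def m_def last_conv_nth)
  obtain f \<mu> where
    fP: "\<forall>i. Suc i < length p \<longrightarrow>
          f i \<in> S \<and> fst (f i) \<in> E \<and> otail src tgt (f i) \<in> p ! i \<and>
          ohead src tgt (f i) \<in> p ! Suc i \<and> \<mu> i = U (fst (f i)) \<and>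
          (\<forall>d. fst d \<in> E \<and> otail src tgt d \<in> p ! i \<and> ohead src tgt d \<notin> p ! i \<and> d \<noteq> f i
               \<longrightarrow> U (fst (f i)) < U (fst d))"
    and monoP: "\<forall>i j. i < j \<and> Suc j < length p \<longrightarrow> U (fst (f j)) < U (fst (f i))"
    and wtP: "\<forall>i<length p. \<forall>d. fst d \<in> E \<and> otail src tgt d \<in> p ! i \<and> ohead src tgt d \<notin> p ! i
               \<longrightarrow> wt s d = U (fst d) - \<mu> i"
    using fex by blast
  have fE: "\<And>i. i < m \<Longrightarrow> f i \<in> S \<and> fst (f i) \<in> E \<and> otail src tgt (f i) \<in> p!i \<and>
      ohead src tgt (f i) \<in> p!Suc i \<and> \<mu> i = U (fst (f i))"
    using fP lenp by auto
  have Gi: "\<And>i d. i < m \<Longrightarrow> fst d \<in> E \<Longrightarrow> otail src tgt d \<in> p!i \<Longrightarrow> ohead src tgt d \<notin> p!i \<Longrightarrow> d \<noteq> f i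
      \<Longrightarrow> U (fst (f i)) < U (fst d)"
  proof -
    fix i d assume a: "i < m" "fst d \<in> E" "otail src tgt d \<in> p!i" "ohead src tgt d \<notin> p!i" "d \<noteq> f i"
    have "Suc i < length p" using a lenp by simp
    then show "U (fst (f i)) < U (fst d)" using fP a by blast
  qed
  have mono: "\<And>i j. i < j \<Longrightarrow> j < m \<Longrightarrow> U (fst (f j)) < U (fst (f i))"
    using monoP lenp by auto
  have monole: "\<And>i j. i \<le> j \<Longrightarrow> j < m \<Longrightarrow> U (fst (f j)) \<le> U (fst (f i))"
    using mono by (metis le_less order.refl)
  have wtc: "\<And>i d. i \<le> m \<Longrightarrow> fst d \<in> E \<Longrightarrow> otail src tgt d \<in> p!i \<Longrightarrow> ohead src tgt d \<notin> p!i
      \<Longrightarrow> wt s d = U (fst d) - \<mu> i"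
    using wtP lenp by auto
  have same: "\<And>i j u. i \<le> m \<Longrightarrow> j \<le> m \<Longrightarrow> u \<in> p!i \<Longrightarrow> u \<in> p!j \<Longrightarrow> i = j"
    using disj lenp by (metis disjoint_iff less_Suc_eq_le)
  have inR: "\<And>u. u \<in> R \<longleftrightarrow> (\<exists>i\<le>m. u \<in> p!i)"
    unfolding R_def using lenp by (auto simp: in_set_conv_nth less_Suc_eq_le) (metis le_imp_less_Suc nth_mem)
  have out_fin: "finite out"
    by (rule finite_subset[of _ "E \<times> UNIV"]) (auto simp: out_def finE)
  have out_ne: "out \<noteq> {}"
    using exists_out[of v] cl vm lenp by (auto simp: out_def)
  define d0 where "d0 = arg_min_on (\<lambda>d. U (fst d)) out"
  have d0out: "d0 \<in> out" and d0le: "\<not>(\<exists>d\<in>out. U (fst d) < U (fst d0))"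
    using arg_min_if_finite[OF out_fin out_ne, of "\<lambda>d. U (fst d)"] by (auto simp: d0_def)
  have d0strict: "\<And>d. d \<in> out \<Longrightarrow> d \<noteq> d0 \<Longrightarrow> U (fst d0) < U (fst d)"
  proof -
    fix d assume d: "d \<in> out" "d \<noteq> d0"
    have "U (fst d) \<noteq> U (fst d0)"
    proof
      assume "U (fst d) = U (fst d0)"
      then have "fst d = fst d0" using U_inj d d0out by (auto simp: out_def)
      then have "d0 = flip d" using same_fst d by metis
      then show False using d d0out by (auto simp: out_def)
    qed
    then show "U (fst d0) < U (fst d)" using d0le d by force
  qed
  have wt_out: "\<And>d. d \<in> out \<Longrightarrow> wt s d = U (fst d) - \<mu> m"
    using wtc[of m] vm by (auto simp: out_def)
  have Min_eq: "Min (wt s ` out) = U (fst d0) - \<mu> m"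
  proof (rule Min_eqI)
    show "finite (wt s ` out)" using out_fin by simp
    show "\<And>y. y \<in> wt s ` out \<Longrightarrow> U (fst d0) - \<mu> m \<le> y"
      using d0le wt_out by force
    show "U (fst d0) - \<mu> m \<in> wt s ` out" using d0out wt_out[OF d0out] by (metis image_eqI)
  qed
  have ed_eq: "(THE d. d \<in> out \<and> (if d \<in> out then wt s d - Min (wt s ` out) else wt s d) = 0) = d0"
  proof (rule the_equality)
    show "d0 \<in> out \<and> (if d0 \<in> out then wt s d0 - Min (wt s ` out) else wt s d0) = 0"
      using d0out wt_out Min_eq by simp
    fix d assume "d \<in> out \<and> (if d \<in> out then wt s d - Min (wt s ` out) else wt s d) = 0"
    then have h1: "d \<in> out" and "wt s d - Min (wt s ` out) = 0" by auto
    then have "U (fst d) = U (fst d0)" using wt_out[OF h1] Min_eq by simp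
    then show "d = d0" using d0strict h1 by (metis less_irrefl)
  qed
  define W' where "W' = (\<lambda>d. if d \<in> out then wt s d - Min (wt s ` out) else wt s d)"
  define hb where "hb = cls s (ohead src tgt d0)"
  have cs: "cleb_step E src tgt bd s = (if hb \<in> set p then
           (let i = (LEAST i. i < length p \<and> p ! i = hb);
                cyc = drop i p;
                new = \<Union> (set cyc)
            in s\<lparr> cls := (\<lambda>u. if cls s u \<in> set cyc then new else cls s u),
                  path := take i p @ [new],
                  wt := W', exposed := insert d0 S, revealed := Some d0 \<rparr>)
         else
           s\<lparr> path := p @ [hb], wt := W', exposed := insert d0 S,
              stopped := (bd \<in> hb), revealed := Some d0 \<rparr>)"
    unfolding cleb_step_def if_not_P[OF nst] Let_def p_def[symmetric] v_def[symmetric] out_def[symmetric]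
      ed_eq W'_def[symmetric] hb_def[symmetric] S_def[symmetric] by (rule refl)
  have d0E: "fst d0 \<in> E" "otail src tgt d0 \<in> v" "ohead src tgt d0 \<notin> v"
    using d0out by (auto simp: out_def)
  have vR: "v \<subseteq> R" using inR vm by auto
  have flipout: "0 < m \<Longrightarrow> flip (f (m-1)) \<in> out"
  proof -
    assume m0: "0 < m"
    have fm: "f (m-1) \<in> S \<and> fst (f (m-1)) \<in> E \<and> otail src tgt (f (m-1)) \<in> p!(m-1) \<and>
      ohead src tgt (f (m-1)) \<in> p!Suc (m-1)" using fE[of "m-1"] m0 by simp
    have "otail src tgt (f (m-1)) \<notin> v"
      using same[of "m-1" m "otail src tgt (f (m-1))"] fm vm m0 by auto
    then show "flip (f (m-1)) \<in> out" using fm vm m0 by (simp add: out_def)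
  qed
  have ltlast: "0 < m \<Longrightarrow> d0 \<noteq> flip (f (m-1)) \<Longrightarrow> U (fst d0) < U (fst (f (m-1)))"
    using d0strict flipout by fastforce
  have caseB: "\<not>(0 < m \<and> d0 = flip (f (m-1))) \<Longrightarrow> ohead src tgt d0 \<notin> R"
  proof
    assume nA: "\<not>(0 < m \<and> d0 = flip (f (m-1)))" and yR: "ohead src tgt d0 \<in> R"
    then obtain j where j: "j \<le> m" "ohead src tgt d0 \<in> p!j" using inR by auto
    have "j \<noteq> m" using j d0E vm by auto
    then have jm: "j < m" and m0: "0 < m" using j by auto
    then have dne: "d0 \<noteq> flip (f (m-1))" using nA by auto
    have lt: "U (fst d0) < U (fst (f (m-1)))" using ltlast[OF m0 dne] .
    have fj: "ohead src tgt (f j) \<in> p!Suc j" using fE[OF jm] by simp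
    have ne: "flip d0 \<noteq> f j"
    proof
      assume eq: "flip d0 = f j"
      then have "ohead src tgt (f j) = otail src tgt d0" by (metis ohead_flip)
      then have "ohead src tgt (f j) \<in> p!m" using d0E vm by simp
      then have "Suc j = m" using same[of "Suc j" m] fj jm by auto
      then have "f (m-1) = flip d0" using eq by auto
      then show False using dne by auto
    qed
    have nj: "otail src tgt d0 \<notin> p!j" using same[of j m "otail src tgt d0"] d0E vm j \<open>j \<noteq> m\<close> by auto
    have "U (fst (f j)) < U (fst d0)"
      using Gi[OF jm, of "flip d0"] d0E j nj ne by simp
    moreover have "U (fst (f (m-1))) \<le> U (fst (f j))" using monole[of j "m-1"] jm by simp
    ultimately show False using lt by simp
  qed
  show ?thesis
  proof (cases "0 < m \<and> d0 = flip (f (m-1))")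
    case True
    define n where "n = m - 1"
    have mn: "m = Suc n" using True by (simp add: n_def)
    have d0f: "d0 = flip (f n)" using True by (simp add: n_def)
    have fn: "f n \<in> S" "fst (f n) \<in> E" "otail src tgt (f n) \<in> p!n" "ohead src tgt (f n) \<in> p!m"
      "\<mu> n = U (fst (f n))"
      using fE[of n] mn by auto
    have hbn: "hb = p!n" unfolding hb_def d0f using clsin fn lenp mn by simp
    have hbin: "hb \<in> set p" using hbn lenp mn by simp
    have pn_ne: "p!n \<noteq> {}" using cl lenp mn by simp
    have least: "(LEAST i. i < length p \<and> p ! i = hb) = n"
    proof (rule Least_equality)
      show "n < length p \<and> p ! n = hb" using hbn lenp mn by simp
      fix y assume y: "y < length p \<and> p ! y = hb"
      obtain u where "u \<in> p!n" using pn_ne by auto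
      then have "y = n" using same[of y n u] y hbn lenp mn by auto
      then show "n \<le> y" by simp
    qed
    have dr: "drop n p = [p!n, p!m]"
    proof -
      have "drop n p = p!n # drop (Suc n) p" using lenp mn by (simp add: Cons_nth_drop_Suc)
      moreover have "drop (Suc n) p = p!Suc n # drop (Suc (Suc n)) p" using Cons_nth_drop_Suc[of "Suc n" p] lenp mn by simp
      moreover have "drop (Suc (Suc n)) p = []" using lenp mn by simp
      ultimately show ?thesis using mn by simp
    qed
    define q where "q = take n p"
    define a where "a = p!n"
    define b where "b = p!m"
    have pq: "p = q @ [a, b]" using dr unfolding a_def b_def by (metis append_take_drop_id q_def)
    have lq: "length q = n" using lenp mn by (simp add: q_def)
    define new where "new = \<Union>(set [p!n, p!m])"
    have new_eq: "new = p!n \<union> p!m" by (simp add: new_def)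
    define p' where "p' = q @ [new]"
    define c' where "c' = (\<lambda>u. if cls s u \<in> set [p!n, p!m] then new else cls s u)"
    have cs': "cleb_step E src tgt bd s = s\<lparr> cls := c', path := p', wt := W', exposed := insert d0 S, revealed := Some d0 \<rparr>"
      unfolding cs if_P[OF hbin] Let_def least dr q_def[symmetric] new_def[symmetric]
        c'_def[symmetric] p'_def[symmetric] by (rule refl)
    have lp': "length p' = Suc n" using lq by (simp add: p'_def)
    have p'lt: "\<And>i. i < n \<Longrightarrow> p'!i = p!i"
    proof -
      fix i assume i: "i < n"
      have "p!i = q!i" using i lq by (subst pq) (simp add: nth_append)
      then show "p'!i = p!i" using i lq by (simp add: p'_def nth_append)
    qed
    have p'n: "p'!n = new" using nth_append_length[of q new "[]"] lq by (simp add: p'_def)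
    have Up': "\<Union>(set p') = R"
    proof -
      have "set p = set q \<union> {a, b}" by (subst pq) simp
      then have "\<Union>(set p) = \<Union>(set q) \<union> (a \<union> b)" by auto
      moreover have "\<Union>(set p') = \<Union>(set q) \<union> (a \<union> b)" unfolding p'_def new_eq a_def b_def by auto
      ultimately show ?thesis unfolding R_def by simp
    qed
    have fnT: "fst d0 \<in> unoriented S" unfolding unoriented_def d0f
      by (rule CollectI, rule exI[of _ "snd (f n)"]) (simp add: fn)
    have Tsame: "unoriented (insert d0 S) = unoriented S" unfolding unoriented_insert using fnT by (rule insert_absorb)
    have pnm: "\<And>i. i < n \<Longrightarrow> p!i \<inter> p!n = {} \<and> p!i \<inter> p!m = {} \<and> p!i \<noteq> {}"
    proof -
      fix i assume i: "i < n"
      show "p!i \<inter> p!n = {} \<and> p!i \<inter> p!m = {} \<and> p!i \<noteq> {}"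
        using disj[rule_format, of i n] disj[rule_format, of i m] cl i lenp mn by auto
    qed
    have Pn: "Pinv V E src tgt U bd x (s\<lparr> cls := c', path := p', wt := W', exposed := insert d0 S, revealed := Some d0 \<rparr>)"
    proof (rule PinvI[where p = p' and c = c' and w = W' and S = "insert d0 S" and f = f and \<mu> = \<mu>])
      show "\<not> stopped (s\<lparr>cls := c', path := p', wt := W', exposed := insert d0 S, revealed := Some d0\<rparr>)"
        using nst by simp
      show "p' \<noteq> []" by (simp add: p'_def)
      show "\<forall>i<length p'. p'!i \<noteq> {} \<and> p'!i \<subseteq> V \<and> bd \<notin> p'!i"
      proof (intro allI impI)
        fix i assume "i < length p'"
        then have "i < n \<or> i = n" using lp' by auto
        then show "p'!i \<noteq> {} \<and> p'!i \<subseteq> V \<and> bd \<notin> p'!i"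
        proof
          assume i: "i < n"
          have "p!i \<noteq> {} \<and> p!i \<subseteq> V \<and> bd \<notin> p!i" using cl i lenp mn by simp
          then show ?thesis using p'lt[OF i] by simp
        next
          assume i: "i = n"
          have "p!n \<noteq> {} \<and> p!n \<subseteq> V \<and> bd \<notin> p!n" "p!m \<noteq> {} \<and> p!m \<subseteq> V \<and> bd \<notin> p!m"
            using cl lenp mn by auto
          then show ?thesis using p'n new_eq i by auto
        qed
      qed
      show "\<forall>i<length p'. \<forall>j<length p'. i \<noteq> j \<longrightarrow> p'!i \<inter> p'!j = {}"
      proof (intro allI impI)
        fix i j assume ij: "i < length p'" "j < length p'" "i \<noteq> j"
        then have "(i < n \<and> j < n) \<or> (i < n \<and> j = n) \<or> (i = n \<and> j < n)" using lp' by auto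
        then show "p'!i \<inter> p'!j = {}"
        proof (elim disjE conjE)
          assume i: "i < n" and j: "j < n"
          then show ?thesis using disj[rule_format, of i j] ij lenp mn p'lt by simp
        next
          assume i: "i < n" and j: "j = n"
          have "p!i \<inter> p!n = {}" "p!i \<inter> p!m = {}" using disj[rule_format, of i n] disj[rule_format, of i m] i lenp mn by auto
          then show ?thesis using p'lt[OF i] j p'n new_eq by auto
        next
          assume i: "i = n" and j: "j < n"
          have jn: "j \<noteq> n" "j \<noteq> m" "j < length p" "n < length p" "m < length p" using j lenp mn by auto
          have "p!j \<inter> p!n = {}" "p!j \<inter> p!m = {}" using disj jn by blast+
          then show ?thesis using p'lt[OF j] i p'n new_eq by auto
        qed
      qed
      show "\<forall>i<length p'. \<forall>u\<in>p'!i. c' u = p'!i"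
      proof (intro allI impI ballI)
        fix i u assume iu: "i < length p'" "u \<in> p'!i"
        then have "i < n \<or> i = n" using lp' by auto
        then show "c' u = p'!i"
        proof
          assume i: "i < n"
          then have "cls s u = p!i" using clsin[rule_format, of i u] iu p'lt lenp mn by auto
          moreover have "p!i \<noteq> p!n" "p!i \<noteq> p!m" using pnm[OF i] by auto
          ultimately show ?thesis using p'lt i by (simp add: c'_def)
        next
          assume i: "i = n"
          then have "u \<in> p!n \<or> u \<in> p!m" using iu p'n new_eq by auto
          then have "cls s u = p!n \<or> cls s u = p!m" using clsin[rule_format, of n u] clsin[rule_format, of m u] lenp mn by auto
          then show ?thesis using i p'n by (auto simp: c'_def)
        qed
      qed
      show "\<forall>u. u \<notin> \<Union>(set p') \<longrightarrow> c' u = {u}"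
      proof (intro allI impI)
        fix u assume "u \<notin> \<Union>(set p')"
        then have uR: "u \<notin> R" using Up' by simp
        then have "cls s u = {u}" using clsout by (simp add: R_def)
        moreover have "{u} \<noteq> p!n" "{u} \<noteq> p!m" using uR inR[of u] lenp mn by (metis insertI1 le_refl le_SucI)+
        ultimately show "c' u = {u}" by (simp add: c'_def)
      qed
      show "\<Union>(set p') = ip_verts src tgt x (unoriented (insert d0 S))"
        using Up' RT Tsame by (simp add: R_def)
      show "\<forall>d. fst d \<in> E \<and> otail src tgt d \<notin> \<Union>(set p') \<longrightarrow> W' d = U (fst d)"
      proof (intro allI impI)
        fix d assume d: "fst d \<in> E \<and> otail src tgt d \<notin> \<Union>(set p')"
        then have "d \<notin> out" using vR Up' by (auto simp: out_def)
        then show "W' d = U (fst d)" using wtR' d Up' by (simp add: W'_def)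
      qed
      show "\<forall>i. Suc i < length p' \<longrightarrow>
          f i \<in> insert d0 S \<and> fst (f i) \<in> E \<and> otail src tgt (f i) \<in> p' ! i \<and>
          ohead src tgt (f i) \<in> p' ! Suc i \<and> \<mu> i = U (fst (f i)) \<and>
          (\<forall>d. fst d \<in> E \<and> otail src tgt d \<in> p' ! i \<and> ohead src tgt d \<notin> p' ! i \<and> d \<noteq> f i
               \<longrightarrow> U (fst (f i)) < U (fst d))"
      proof (intro allI impI)
        fix i assume "Suc i < length p'"
        then have i: "i < n" using lp' by simp
        have im: "i < m" using i mn by simp
        have hd: "ohead src tgt (f i) \<in> p' ! Suc i"
        proof (cases "Suc i < n")
          case True then show ?thesis using fE[OF im] p'lt by simp
        next
          case False then have "Suc i = n" using i by simp
          then show ?thesis using fE[OF im] p'n new_eq by simp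
        qed
        show "f i \<in> insert d0 S \<and> fst (f i) \<in> E \<and> otail src tgt (f i) \<in> p' ! i \<and>
          ohead src tgt (f i) \<in> p' ! Suc i \<and> \<mu> i = U (fst (f i)) \<and>
          (\<forall>d. fst d \<in> E \<and> otail src tgt d \<in> p' ! i \<and> ohead src tgt d \<notin> p' ! i \<and> d \<noteq> f i
               \<longrightarrow> U (fst (f i)) < U (fst d))"
          using fE[OF im] Gi[OF im] hd p'lt[OF i] by auto
      qed
      show "\<forall>i j. i < j \<and> Suc j < length p' \<longrightarrow> U (fst (f j)) < U (fst (f i))"
        using mono lp' mn by auto
      show "\<forall>i<length p'. \<forall>d. fst d \<in> E \<and> otail src tgt d \<in> p' ! i \<and> ohead src tgt d \<notin> p' ! i
               \<longrightarrow> W' d = U (fst d) - \<mu> i"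
      proof (intro allI impI)
        fix i d assume i: "i < length p'" and d: "fst d \<in> E \<and> otail src tgt d \<in> p' ! i \<and> ohead src tgt d \<notin> p' ! i"
        have "i < n \<or> i = n" using i lp' by auto
        then show "W' d = U (fst d) - \<mu> i"
        proof
          assume i: "i < n"
          then have "otail src tgt d \<notin> v" using d p'lt pnm vm by auto
          then have "d \<notin> out" by (simp add: out_def)
          then show ?thesis using wtc[of i d] d p'lt i mn by (simp add: W'_def)
        next
          assume i: "i = n"
          then have dn: "otail src tgt d \<in> p!n \<or> otail src tgt d \<in> p!m" "ohead src tgt d \<notin> p!n" "ohead src tgt d \<notin> p!m"
            using d p'n new_eq by auto
          show ?thesis
          proof (cases "otail src tgt d \<in> p!m")
            case True
            then have "d \<in> out" using dn d vm by (simp add: out_def)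
            then show ?thesis using wt_out Min_eq fn d0f i by (simp add: W'_def)
          next
            case False
            then have "d \<notin> out" using vm by (simp add: out_def)
            then show ?thesis using wtc[of n d] dn d False i mn by (simp add: W'_def)
          qed
        qed
      qed
    qed (simp_all)
    show ?thesis
      by (rule exI[of _ d0]) (use cs' Pn fn d0f in \<open>simp add: S_def\<close>)
  next
    case False
    define y where "y = ohead src tgt d0"
    have yR: "y \<notin> R" using caseB[OF False] by (simp add: y_def)
    have yV: "y \<in> V" using ends_V[OF d0E(1)] by (simp add: y_def)
    have hby: "hb = {y}" using clsout'[OF yR] by (simp add: hb_def y_def)
    have hbnin: "hb \<notin> set p"
    proof
      assume "hb \<in> set p"
      then have "y \<in> R" using hby unfolding R_def by auto
      then show False using yR by simp
    qed
    define p' where "p' = p @ [{y}]"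
    have cs': "cleb_step E src tgt bd s = s\<lparr> path := p', wt := W', exposed := insert d0 S, stopped := (bd \<in> {y}), revealed := Some d0 \<rparr>"
      unfolding cs if_not_P[OF hbnin] by (simp add: hby p'_def)
    have tR: "otail src tgt d0 \<in> R" using d0E vR by auto
    have flipnin: "flip d0 \<notin> S"
    proof
      assume "flip d0 \<in> S"
      then have "fst d0 \<in> unoriented S" unfolding unoriented_def
        by (metis (mono_tags, lifting) fst_flip mem_Collect_eq prod.collapse)
      then have "src (fst d0) \<in> R" "tgt (fst d0) \<in> R" using RT' by (auto simp: ip_verts_def)
      moreover have "y \<in> {src (fst d0), tgt (fst d0)}" using ends[of src tgt d0] by (auto simp: y_def)
      ultimately show False using yR by auto
    qed
    have cand: "ip_candidates E src tgt x (unoriented S) = {e \<in> E. (src e \<in> R) \<noteq> (tgt e \<in> R)}"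
      by (simp add: ip_candidates_def RT'[symmetric])
    have d0cand: "fst d0 \<in> {e \<in> E. (src e \<in> R) \<noteq> (tgt e \<in> R)}"
    proof -
      have "{otail src tgt d0, y} = {src (fst d0), tgt (fst d0)}" using ends[of src tgt d0] by (simp add: y_def)
      then show ?thesis using tR yR d0E by (auto simp: doubleton_eq_iff)
    qed
    have ltf: "\<And>i. i < m \<Longrightarrow> U (fst d0) < U (fst (f i))"
    proof -
      fix i assume i: "i < m"
      then have m0: "0 < m" by simp
      have "d0 \<noteq> flip (f (m-1))" using False m0 by simp
      then have "U (fst d0) < U (fst (f (m-1)))" using ltlast m0 by simp
      moreover have "U (fst (f (m-1))) \<le> U (fst (f i))" using monole[of i "m-1"] i by simp
      ultimately show "U (fst d0) < U (fst (f i))" by simp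
    qed
    have strict: "\<forall>e\<in>{e \<in> E. (src e \<in> R) \<noteq> (tgt e \<in> R)}. e \<noteq> fst d0 \<longrightarrow> U (fst d0) < U e"
    proof (intro ballI impI)
      fix e assume e: "e \<in> {e \<in> E. (src e \<in> R) \<noteq> (tgt e \<in> R)}" and ne: "e \<noteq> fst d0"
      then obtain bb where bb: "otail src tgt (e,bb) \<in> R" "ohead src tgt (e,bb) \<notin> R"
        using orient[of src e R tgt] by auto
      obtain i where i: "i \<le> m" "otail src tgt (e,bb) \<in> p!i" using bb inR by auto
      have hnot: "ohead src tgt (e,bb) \<notin> p!i" using bb i inR by auto
      show "U (fst d0) < U e"
      proof (cases "i = m")
        case True
        then have "(e,bb) \<in> out" using e i hnot vm by (simp add: out_def)
        moreover have "(e,bb) \<noteq> d0" using ne by auto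
        ultimately show ?thesis using d0strict by fastforce
      next
        case False
        then have im: "i < m" using i by simp
        have "(e,bb) \<noteq> f i" using fE[OF im] bb inR[of "ohead src tgt (f i)"] im by auto
        then have "U (fst (f i)) < U e" using Gi[OF im, of "(e,bb)"] e i hnot by simp
        then show ?thesis using ltf[OF im] by simp
      qed
    qed
    have argm: "fst d0 = arg_min_on U (ip_candidates E src tgt x (unoriented S))"
      unfolding cand using arg_min_on_unique[OF d0cand strict] by simp
    have cand_ne: "ip_candidates E src tgt x (unoriented S) \<noteq> {}" using cand d0cand by auto
    have res: "stopped (cleb_step E src tgt bd s) \<or> Pinv V E src tgt U bd x (cleb_step E src tgt bd s)"
    proof (cases "y = bd")
      case True
      then show ?thesis using cs' by simp
    next
      case ybd: False
      define f' where "f' = f(m := d0)"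
      define \<mu>' where "\<mu>' = \<mu>(m := U (fst d0), Suc m := 0)"
      have lp': "length p' = Suc (Suc m)" using lenp by (simp add: p'_def)
      have p'le: "\<And>i. i \<le> m \<Longrightarrow> p'!i = p!i" using lenp by (simp add: p'_def nth_append)
      have p'm: "p'!Suc m = {y}" using lenp nth_append_length[of p "{y}" "[]"] by (simp add: p'_def)
      have Up': "\<Union>(set p') = insert y R" by (simp add: p'_def R_def)
      have yp: "\<And>i. i \<le> m \<Longrightarrow> y \<notin> p!i" using yR inR by auto
      have Pn: "Pinv V E src tgt U bd x (s\<lparr> path := p', wt := W', exposed := insert d0 S, stopped := (bd \<in> {y}), revealed := Some d0 \<rparr>)"
      proof (rule PinvI[where p = p' and c = "cls s" and w = W' and S = "insert d0 S" and f = f' and \<mu> = \<mu>'])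
        show "\<not> stopped (s\<lparr> path := p', wt := W', exposed := insert d0 S, stopped := (bd \<in> {y}), revealed := Some d0 \<rparr>)"
          using ybd by auto
        show "p' \<noteq> []" by (simp add: p'_def)
        show "\<forall>i<length p'. p'!i \<noteq> {} \<and> p'!i \<subseteq> V \<and> bd \<notin> p'!i"
        proof (intro allI impI)
          fix i assume "i < length p'"
          then have "i \<le> m \<or> i = Suc m" using lp' by auto
          then show "p'!i \<noteq> {} \<and> p'!i \<subseteq> V \<and> bd \<notin> p'!i"
          proof
            assume i: "i \<le> m"
            then show ?thesis using cl[rule_format, of i] lenp p'le[OF i] by simp
          next
            assume i: "i = Suc m"
            then show ?thesis using p'm yV ybd by auto
          qed
        qed
        show "\<forall>i<length p'. \<forall>j<length p'. i \<noteq> j \<longrightarrow> p'!i \<inter> p'!j = {}"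
        proof (intro allI impI)
          fix i j assume ij: "i < length p'" "j < length p'" "i \<noteq> j"
          then have "(i \<le> m \<and> j \<le> m) \<or> (i \<le> m \<and> j = Suc m) \<or> (i = Suc m \<and> j \<le> m)" using lp' by auto
          then show "p'!i \<inter> p'!j = {}"
          proof (elim disjE conjE)
            assume i: "i \<le> m" and j: "j \<le> m"
            have "i < length p" "j < length p" using i j lenp by auto
            then have "p!i \<inter> p!j = {}" using disj ij by blast
            then show ?thesis using p'le[OF i] p'le[OF j] by simp
          next
            assume i: "i \<le> m" and j: "j = Suc m"
            then show ?thesis using p'le[OF i] p'm yp[OF i] by auto
          next
            assume i: "i = Suc m" and j: "j \<le> m"
            then show ?thesis using p'le[OF j] p'm yp[OF j] by auto
          qed
        qed
        show "\<forall>i<length p'. \<forall>u\<in>p'!i. cls s u = p'!i"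
        proof (intro allI impI ballI)
          fix i u assume iu: "i < length p'" "u \<in> p'!i"
          then have "i \<le> m \<or> i = Suc m" using lp' by auto
          then show "cls s u = p'!i"
          proof
            assume i: "i \<le> m"
            then show ?thesis using clsin[rule_format, of i u] iu p'le[OF i] lenp by simp
          next
            assume i: "i = Suc m"
            then show ?thesis using iu p'm clsout'[OF yR] by simp
          qed
        qed
        show "\<forall>u. u \<notin> \<Union>(set p') \<longrightarrow> cls s u = {u}"
          using clsout' Up' by auto
        show "\<Union>(set p') = ip_verts src tgt x (unoriented (insert d0 S))"
        proof -
          have "ip_verts src tgt x (unoriented (insert d0 S)) = insert (src (fst d0)) (insert (tgt (fst d0)) R)"
            by (simp add: unoriented_insert ip_verts_insert RT')
          also have "\<dots> = insert (otail src tgt d0) (insert y R)"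
            using ends[of src tgt d0] unfolding y_def by (auto simp: doubleton_eq_iff)
          also have "\<dots> = insert y R" using tR by auto
          finally show ?thesis using Up' by simp
        qed
        show "\<forall>d. fst d \<in> E \<and> otail src tgt d \<notin> \<Union>(set p') \<longrightarrow> W' d = U (fst d)"
        proof (intro allI impI)
          fix d assume d: "fst d \<in> E \<and> otail src tgt d \<notin> \<Union>(set p')"
          then have "d \<notin> out" using vR Up' by (auto simp: out_def)
          then show "W' d = U (fst d)" using wtR' d Up' by (simp add: W'_def)
        qed
        show "\<forall>i. Suc i < length p' \<longrightarrow>
          f' i \<in> insert d0 S \<and> fst (f' i) \<in> E \<and> otail src tgt (f' i) \<in> p' ! i \<and>
          ohead src tgt (f' i) \<in> p' ! Suc i \<and> \<mu>' i = U (fst (f' i)) \<and>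
          (\<forall>d. fst d \<in> E \<and> otail src tgt d \<in> p' ! i \<and> ohead src tgt d \<notin> p' ! i \<and> d \<noteq> f' i
               \<longrightarrow> U (fst (f' i)) < U (fst d))"
        proof (intro allI impI)
          fix i assume "Suc i < length p'"
          then have "i < m \<or> i = m" using lp' by auto
          then show "f' i \<in> insert d0 S \<and> fst (f' i) \<in> E \<and> otail src tgt (f' i) \<in> p' ! i \<and>
            ohead src tgt (f' i) \<in> p' ! Suc i \<and> \<mu>' i = U (fst (f' i)) \<and>
            (\<forall>d. fst d \<in> E \<and> otail src tgt d \<in> p' ! i \<and> ohead src tgt d \<notin> p' ! i \<and> d \<noteq> f' i
                 \<longrightarrow> U (fst (f' i)) < U (fst d))"
          proof
            assume im: "i < m"
            have e1: "f' i = f i" "\<mu>' i = \<mu> i" using im by (auto simp: f'_def \<mu>'_def)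
            have e2: "p'!i = p!i" "p'!Suc i = p!Suc i" using im p'le by auto
            show ?thesis unfolding e1 e2 using fE[OF im] Gi[OF im] by auto
          next
            assume im: "i = m"
            have e1: "f' i = d0" "\<mu>' i = U (fst d0)" using im by (auto simp: f'_def \<mu>'_def)
            have e2: "p'!i = v" "p'!Suc i = {y}" using im p'le p'm vm by auto
            have "\<forall>d. fst d \<in> E \<and> otail src tgt d \<in> v \<and> ohead src tgt d \<notin> v \<and> d \<noteq> d0
                 \<longrightarrow> U (fst d0) < U (fst d)"
              using d0strict by (auto simp: out_def)
            then show ?thesis unfolding e1 e2 using d0E by (simp add: y_def)
          qed
        qed
        show "\<forall>i j. i < j \<and> Suc j < length p' \<longrightarrow> U (fst (f' j)) < U (fst (f' i))"
        proof (intro allI impI)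
          fix i j assume ij: "i < j \<and> Suc j < length p'"
          then have "j < m \<or> j = m" using lp' by auto
          then show "U (fst (f' j)) < U (fst (f' i))"
          proof
            assume j: "j < m"
            then show ?thesis using mono[of i j] ij by (simp add: f'_def)
          next
            assume j: "j = m"
            then show ?thesis using ltf[of i] ij by (simp add: f'_def)
          qed
        qed
        show "\<forall>i<length p'. \<forall>d. fst d \<in> E \<and> otail src tgt d \<in> p' ! i \<and> ohead src tgt d \<notin> p' ! i
               \<longrightarrow> W' d = U (fst d) - \<mu>' i"
        proof (intro allI impI)
          fix i d assume i: "i < length p'" and d: "fst d \<in> E \<and> otail src tgt d \<in> p' ! i \<and> ohead src tgt d \<notin> p' ! i"
          have "i < m \<or> i = m \<or> i = Suc m" using i lp' by auto
          then show "W' d = U (fst d) - \<mu>' i"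
          proof (elim disjE)
            assume i: "i < m"
            have "otail src tgt d \<notin> v" using d p'le[of i] i same[of i m] vm by fastforce
            then have "d \<notin> out" by (simp add: out_def)
            then show ?thesis using wtc[of i d] d p'le[of i] i by (simp add: W'_def \<mu>'_def)
          next
            assume i: "i = m"
            then have "d \<in> out" using d p'le[of m] vm by (simp add: out_def)
            then show ?thesis using wt_out Min_eq i by (simp add: W'_def \<mu>'_def)
          next
            assume i: "i = Suc m"
            then have "otail src tgt d = y" using d p'm by simp
            then have "otail src tgt d \<notin> R" using yR by simp
            moreover then have "d \<notin> out" using vR by (auto simp: out_def)
            ultimately show ?thesis using wtR' d i by (simp add: W'_def \<mu>'_def)
          qed
        qed
      qed (simp_all)
      then show ?thesis using cs' by simp
    qed
    show ?thesis
      by (rule exI[of _ d0]) (use cs' res flipnin argm cand_ne in \<open>simp add: S_def\<close>)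
  qed
qed

end

context cctx begin

abbreviation "st j \<equiv> cleb E src tgt U bd x j"

lemma stopped_step: "stopped s \<Longrightarrow> cleb_step E src tgt bd s = s"
  by (simp add: cleb_step_def)

lemma inv_all: "stopped (st j) \<or> Pinv V E src tgt U bd x (st j)"
proof (induction j)
  case 0 then show ?case using init by simp
next
  case (Suc j)
  show ?case
  proof (cases "stopped (st j)")
    case True then show ?thesis using stopped_step by simp
  next
    case False
    then have "Pinv V E src tgt U bd x (st j)" using Suc by simp
    then show ?thesis using step by fastforce
  qed
qed

lemma nonnew_same:
  assumes "\<not> cleb_new_step E src tgt U bd x (Suc j)"
  shows "unoriented (exposed (st (Suc j))) = unoriented (exposed (st j))"
proof (cases "stopped (st j)")
  case True then show ?thesis using stopped_step by simp
next
  case False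
  then have P: "Pinv V E src tgt U bd x (st j)" using inv_all[of j] by simp
  obtain ed where ed: "revealed (st (Suc j)) = Some ed" "exposed (st (Suc j)) = insert ed (exposed (st j))"
    using step[OF P] unfolding cleb.simps(2) by blast
  have "flip ed \<in> exposed (st j)" using assms False ed by (simp add: cleb_new_step_def)
  then have "fst ed \<in> unoriented (exposed (st j))" unfolding unoriented_def
    by (metis (mono_tags, lifting) fst_flip mem_Collect_eq prod.collapse)
  then show ?thesis using ed by (simp add: unoriented_insert insert_absorb)
qed

lemma new_step:
  assumes "cleb_new_step E src tgt U bd x (Suc j)"
  shows "ip_candidates E src tgt x (unoriented (exposed (st j))) \<noteq> {} \<and>
    unoriented (exposed (st (Suc j))) = insert (arg_min_on U (ip_candidates E src tgt x (unoriented (exposed (st j))))) (unoriented (exposed (st j)))"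
proof -
  have ns: "\<not> stopped (st j)" using assms by (simp add: cleb_new_step_def)
  then have P: "Pinv V E src tgt U bd x (st j)" using inv_all[of j] by simp
  obtain ed where ed: "revealed (st (Suc j)) = Some ed" "exposed (st (Suc j)) = insert ed (exposed (st j))"
    "flip ed \<notin> exposed (st j) \<longrightarrow> ip_candidates E src tgt x (unoriented (exposed (st j))) \<noteq> {} \<and>
         fst ed = arg_min_on U (ip_candidates E src tgt x (unoriented (exposed (st j))))"
    using step[OF P] unfolding cleb.simps(2) by blast
  have "flip ed \<notin> exposed (st j)" using assms ed by (simp add: cleb_new_step_def)
  then show ?thesis using ed by (simp add: unoriented_insert)
qed

lemma between:
  assumes "s \<le> w" "\<forall>u. s < u \<and> u \<le> w \<longrightarrow> \<not> cleb_new_step E src tgt U bd x u"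
  shows "unoriented (exposed (st w)) = unoriented (exposed (st s))"
  using assms
proof (induction w rule: dec_induct)
  case base then show ?case by simp
next
  case (step w)
  then have "\<not> cleb_new_step E src tgt U bd x (Suc w)" by simp
  then show ?case using nonnew_same step by simp
qed

lemma new1: "cleb_new_step E src tgt U bd x 1"
proof -
  have P: "Pinv V E src tgt U bd x (st 0)" using init by simp
  obtain ed where ed: "revealed (st (Suc 0)) = Some ed"
    using step[OF P] unfolding cleb.simps(2) by blast
  then show ?thesis by (simp add: cleb_new_step_def cleb_init_def)
qed

lemma tau_main: "cleb_tau E src tgt U bd x k t \<Longrightarrow> unoriented (exposed (st t)) = invasion E src tgt U x k"
proof (induction rule: cleb_tau.induct)
  case tau_one
  have "ip_candidates E src tgt x (unoriented (exposed (st 0))) \<noteq> {} \<and>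
    unoriented (exposed (st (Suc 0))) = insert (arg_min_on U (ip_candidates E src tgt x (unoriented (exposed (st 0))))) (unoriented (exposed (st 0)))"
    using new_step[of 0] new1 by simp
  then show ?case by (simp add: cleb_init_def unoriented_empty Let_def)
next
  case (tau_suc k s t)
  obtain j where tj: "t = Suc j" using tau_suc by (cases t) auto
  have "unoriented (exposed (st j)) = unoriented (exposed (st s))"
    using between[of s j] tau_suc tj by auto
  then have Tj: "unoriented (exposed (st j)) = invasion E src tgt U x k" using tau_suc by simp
  show ?case using new_step[of j] tau_suc tj Tj by (simp add: Let_def)
qed

end

theorem mainTheorem8:
  fixes V :: "'v set" and E :: "'e set" and src tgt :: "'e \<Rightarrow> 'v"
    and U :: "'e \<Rightarrow> real" and bd x :: 'v and k t :: nat
  assumes "finite_loopless_multigraph V E src tgt"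
    and "mg_connected V E src tgt"
    and "bd \<in> V"
    and "\<forall>e\<in>E. 0 \<le> U e"
    and "generic E U"
    and "x \<in> V" and "x \<noteq> bd"
    and "cleb_tau E src tgt U bd x k t"
  shows "unoriented (exposed (cleb E src tgt U bd x t)) = invasion E src tgt U x k"
proof -
  interpret cctx V E src tgt U bd x
    by (unfold_locales) (use assms in auto)
  show ?thesis using tau_main assms(8) by simp
qed

end
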